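(* Let $t>0$ and $k$ be integers. If there is a wall on $t$ colors whose graph has no clique on $k$ vertices, then there is a wall on $t-1$ colors whose graph has no clique on $k$ vertices.
   Context: An interval graph $G=(V,E)$ comes with an interval representation $v\mapsto I_v$ (intervals of $\mathbb{R}$, distinct $u,v$ adjacent iff $I_u\cap I_v\ne\emptyset$); graphs are finite. $N[v]$ is the closed neighborhood of $v$ and $f(U)$ the image of $U$. A wall is a pair $(G,f)$ where $G$ is an interval graph on vertex set $V$ with a given interval representation, $f\colon V\to\{1,2,\dots\}$ is a proper coloring of $G$, and $f(N[v])\supseteq\{1,\dots,f(v)\}$ for every $v\in V$. It is a wall on $t$ colors if $|f(V)|=t$. *)

theory Defs
  imports "HOL-Analysis.Analysis"
begin

definition interval_rep :: "'a set \<Rightarrow> ('a \<Rightarrow> real set) \<Rightarrow> bool" where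
  "interval_rep V I \<longleftrightarrow> finite V \<and> (\<forall>v\<in>V. is_interval (I v) \<and> I v \<noteq> {})"

definition adj :: "('a \<Rightarrow> real set) \<Rightarrow> 'a \<Rightarrow> 'a \<Rightarrow> bool" where
  "adj I u v \<longleftrightarrow> u \<noteq> v \<and> I u \<inter> I v \<noteq> {}"

definition closed_nbhd :: "'a set \<Rightarrow> ('a \<Rightarrow> real set) \<Rightarrow> 'a \<Rightarrow> 'a set" where
  "closed_nbhd V I v = {u \<in> V. u = v \<or> adj I u v}"

definition is_wall :: "'a set \<Rightarrow> ('a \<Rightarrow> real set) \<Rightarrow> ('a \<Rightarrow> nat) \<Rightarrow> bool" where
  "is_wall V I f \<longleftrightarrow> interval_rep V I
     \<and> (\<forall>v\<in>V. f v \<ge> 1)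
     \<and> (\<forall>u\<in>V. \<forall>v\<in>V. adj I u v \<longrightarrow> f u \<noteq> f v)
     \<and> (\<forall>v\<in>V. {1..f v} \<subseteq> f ` closed_nbhd V I v)"

definition wall_on :: "'a set \<Rightarrow> ('a \<Rightarrow> real set) \<Rightarrow> ('a \<Rightarrow> nat) \<Rightarrow> int \<Rightarrow> bool" where
  "wall_on V I f t \<longleftrightarrow> is_wall V I f \<and> int (card (f ` V)) = t"

definition has_clique :: "'a set \<Rightarrow> ('a \<Rightarrow> real set) \<Rightarrow> int \<Rightarrow> bool" where
  "has_clique V I k \<longleftrightarrow> (\<exists>K\<subseteq>V. int (card K) = k \<and> (\<forall>u\<in>K. \<forall>v\<in>K. u \<noteq> v \<longrightarrow> adj I u v))"

end

theory Submission
  imports Defs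
begin

lemma wall_image:
  assumes w: "is_wall V I f" and ne: "V \<noteq> {}"
  shows "\<exists>m. f ` V = {1..m}"
proof -
  have fin: "finite V" using w by (simp add: is_wall_def interval_rep_def)
  obtain vm where vm: "vm \<in> V" "\<forall>v\<in>V. f v \<le> f vm"
  proof -
    have "Max (f ` V) \<in> f ` V" using fin ne by simp
    then obtain vm where "vm \<in> V" "f vm = Max (f ` V)" by (metis imageE)
    moreover have "\<forall>v\<in>V. f v \<le> Max (f ` V)" using fin by simp
    ultimately show ?thesis using that by metis
  qed
  have "{1..f vm} \<subseteq> f ` V"
    using w vm(1) unfolding is_wall_def closed_nbhd_def by blast
  moreover have "f ` V \<subseteq> {1..f vm}" using w vm(2) unfolding is_wall_def by auto
  ultimately show ?thesis by blast
qed

lemma restrict_wall: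
  assumes w: "is_wall V I f"
  shows "is_wall {v\<in>V. f v \<le> c} I f"
proof -
  have "interval_rep {v\<in>V. f v \<le> c} I" using w unfolding is_wall_def interval_rep_def by auto
  moreover have "\<forall>v\<in>{v\<in>V. f v \<le> c}. {1..f v} \<subseteq> f ` closed_nbhd {v\<in>V. f v \<le> c} I v"
  proof
    fix v assume v: "v \<in> {v\<in>V. f v \<le> c}"
    show "{1..f v} \<subseteq> f ` closed_nbhd {v\<in>V. f v \<le> c} I v"
    proof
      fix x assume x: "x \<in> {1..f v}"
      then obtain u where u: "u \<in> closed_nbhd V I v" "f u = x"
        using w v unfolding is_wall_def by blast
      then have "u \<in> closed_nbhd {v\<in>V. f v \<le> c} I v"
        using x v unfolding closed_nbhd_def by auto
      then show "x \<in> f ` closed_nbhd {v\<in>V. f v \<le> c} I v" using u by blast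
    qed
  qed
  ultimately show ?thesis using w unfolding is_wall_def by auto
qed

lemma transfer_wall:
  assumes b: "bij_betw e W U" and w: "is_wall U I f"
  shows "is_wall W (I \<circ> e) (f \<circ> e)"
proof -
  have fU: "finite U" using w by (simp add: is_wall_def interval_rep_def)
  have fW: "finite W" using b fU bij_betw_finite by blast
  have inj: "inj_on e W" and im: "e ` W = U" using b by (auto simp: bij_betw_def)
  have adj: "\<And>u v. u \<in> W \<Longrightarrow> v \<in> W \<Longrightarrow> adj (I \<circ> e) u v = adj I (e u) (e v)"
    unfolding adj_def using inj by (auto simp: inj_on_eq_iff)
  have "interval_rep W (I \<circ> e)" using w fW im unfolding is_wall_def interval_rep_def by auto
  moreover have "\<forall>v\<in>W. (f \<circ> e) v \<ge> 1" using w im unfolding is_wall_def by auto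
  moreover have "\<forall>u\<in>W. \<forall>v\<in>W. adj (I \<circ> e) u v \<longrightarrow> (f\<circ>e) u \<noteq> (f\<circ>e) v"
    using w im adj unfolding is_wall_def by auto
  moreover have "\<forall>v\<in>W. {1..(f\<circ>e) v} \<subseteq> (f\<circ>e) ` closed_nbhd W (I\<circ>e) v"
  proof
    fix v assume v: "v \<in> W"
    have "closed_nbhd U I (e v) = e ` closed_nbhd W (I\<circ>e) v"
    proof
      show "closed_nbhd U I (e v) \<subseteq> e ` closed_nbhd W (I\<circ>e) v"
      proof
        fix x assume x: "x \<in> closed_nbhd U I (e v)"
        then obtain y where y: "y \<in> W" "x = e y" using im unfolding closed_nbhd_def by auto
        then have "y \<in> closed_nbhd W (I\<circ>e) v" using x v adj inj
          unfolding closed_nbhd_def by (auto simp: inj_on_eq_iff)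
        then show "x \<in> e ` closed_nbhd W (I\<circ>e) v" using y by blast
      qed
      show "e ` closed_nbhd W (I\<circ>e) v \<subseteq> closed_nbhd U I (e v)"
        using v adj im unfolding closed_nbhd_def by auto
    qed
    moreover have "{1..f (e v)} \<subseteq> f ` closed_nbhd U I (e v)" using w v im unfolding is_wall_def by auto
    ultimately show "{1..(f\<circ>e) v} \<subseteq> (f\<circ>e) ` closed_nbhd W (I\<circ>e) v" by (simp add: image_comp)
  qed
  ultimately show ?thesis unfolding is_wall_def by blast
qed

lemma transfer_clique:
  assumes b: "bij_betw e W U" and h: "has_clique W (I \<circ> e) k"
  shows "has_clique U I k"
proof -
  have inj: "inj_on e W" and im: "e ` W = U" using b by (auto simp: bij_betw_def)
  obtain K where K: "K \<subseteq> W" "int (card K) = k" "\<forall>u\<in>K. \<forall>v\<in>K. u \<noteq> v \<longrightarrow> adj (I\<circ>e) u v"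
    using h unfolding has_clique_def by blast
  have "inj_on e K" using inj K(1) inj_on_subset by blast
  then have "card (e ` K) = card K" by (simp add: card_image)
  moreover have "e ` K \<subseteq> U" using K(1) im by blast
  moreover have "\<forall>u\<in>e ` K. \<forall>v\<in>e ` K. u \<noteq> v \<longrightarrow> adj I u v"
    using K(3) unfolding adj_def by auto
  ultimately show ?thesis unfolding has_clique_def using K(2) by metis
qed

lemma clique_sub:
  assumes "U \<subseteq> V" "has_clique U I k" shows "has_clique V I k"
  using assms unfolding has_clique_def by blast

theorem mainTheorem5:
  fixes t k :: int and V :: "'a set" and I :: "'a \<Rightarrow> real set" and f :: "'a \<Rightarrow> nat"
  assumes "t > 0"
    and "wall_on V I f t"
    and "\<not> has_clique V I k"
  shows "\<exists>(V' :: nat set) (I' :: nat \<Rightarrow> real set) (f' :: nat \<Rightarrow> nat).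
           wall_on V' I' f' (t - 1) \<and> \<not> has_clique V' I' k"
proof -
  have w: "is_wall V I f" and ct: "int (card (f ` V)) = t" using assms(2) unfolding wall_on_def by auto
  have fin: "finite V" using w by (simp add: is_wall_def interval_rep_def)
  have "V \<noteq> {}" using ct assms(1) by auto
  then obtain m where m: "f ` V = {1..m}" using wall_image w by blast
  have mt: "int m = t" using ct m by simp
  define c where "c = m - 1"
  define U where "U = {v\<in>V. f v \<le> c}"
  have wU: "is_wall U I f" unfolding U_def by (rule restrict_wall[OF w])
  have fU: "f ` U = {1..c}"
  proof
    show "f ` U \<subseteq> {1..c}" using m unfolding U_def by auto
    show "{1..c} \<subseteq> f ` U"
    proof
      fix x assume x: "x \<in> {1..c}"
      then have "x \<in> f ` V" using m c_def by auto
      then obtain v where "v \<in> V" "f v = x" by blast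
      then show "x \<in> f ` U" using x unfolding U_def by force
    qed
  qed
  have finU: "finite U" using fin U_def by simp
  obtain h where h: "bij_betw h U {0..<card U}" using ex_bij_betw_finite_nat[OF finU] by blast
  define e where "e = inv_into U h"
  have be: "bij_betw e {0..<card U} U" unfolding e_def using h bij_betw_inv_into by blast
  have w2: "is_wall {0..<card U} (I \<circ> e) (f \<circ> e)" by (rule transfer_wall[OF be wU])
  have "(f \<circ> e) ` {0..<card U} = f ` U" using be unfolding bij_betw_def by (metis image_comp)
  then have "int (card ((f \<circ> e) ` {0..<card U})) = t - 1" using fU mt c_def assms(1) by (simp add: of_nat_diff)
  then have "wall_on {0..<card U} (I \<circ> e) (f \<circ> e) (t - 1)" using w2 unfolding wall_on_def by simp
  moreover have "\<not> has_clique {0..<card U} (I \<circ> e) k"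
    using transfer_clique[OF be] clique_sub[of U V I k] assms(3) U_def by blast
  ultimately show ?thesis by blast
qed

end
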